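(* Let $(X,d)$ be a complete separable metric space and let $(\xi_j)_{j=1}^n$ be a time-homogeneous Markov process with state space $X$, initial distribution $P^{(1)}$ and transition kernel $p(\cdot\mid x)$. Suppose there exist constants $\kappa_1>0$ and $L\ge 0$ such that: (i) $P^{(1)}$ and every $p(\cdot\mid x)$ ($x\in X$) satisfy $GC(\kappa_1)$ on $(X,d)$; (ii) $x\mapsto p(\cdot\mid x)$ is $L$-Lipschitz from $(X,d)$ to $(\mathrm{Prob}_1(X),W_1)$, i.e. $W_1(p(\cdot\mid x),p(\cdot\mid y))\le L\,d(x,y)$ for all $x,y\in X$. Then the joint law $P^{(n)}$ of $(\xi_1,\dots,\xi_n)$ satisfies $GC(\kappa_n)$ on $(X^n,d^{(1)})$, where $$\kappa_n=\kappa_1\sum_{m=1}^{n}\Bigl(\sum_{k=0}^{m-1}L^k\Bigr)^2.$$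
   Context: $\mathrm{Prob}(X)$ is the set of Radon (Borel) probability measures on $X$. A measure $\mu\in\mathrm{Prob}(X)$ satisfies the Gaussian concentration inequality $GC(\kappa)$ on $(X,d)$ if $\int_X e^{tF}\,d\mu\le \exp\bigl(t\int_X F\,d\mu+\kappa t^2/2\bigr)$ for all $t\in\mathbb R$ and all $1$-Lipschitz $F:(X,d)\to\mathbb R$. For $1\le s<\infty$, $\mathrm{Prob}_s(X)$ is the set of $\nu\in\mathrm{Prob}(X)$ with $\int d(x_0,y)^s\nu(dy)<\infty$ for some (equivalently all) $x_0$, and $W_s(\mu,\nu)=\inf_\pi\bigl(\iint d(x,y)^s\pi(dx\,dy)\bigr)^{1/s}$, the infimum over couplings $\pi$ of $\mu$ and $\nu$. On $X^k$, $d^{(s)}(x^{(k)},y^{(k)})=(\sum_{j=1}^k d(x_j,y_j)^s)^{1/s}$. The joint law is $P^{(n)}(dx^{(n)})=p(dx_n\mid x_{n-1})\cdots p(dx_2\mid x_1)P^{(1)}(dx_1)$. *)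

theory Defs
  imports "HOL-Probability.Probability"
begin

text \<open>Lipschitz functions are required to be integrable (so that the
  mean is meaningful) and exp(tF) integrable.\<close>
definition GC :: "('b \<Rightarrow> 'b \<Rightarrow> real) \<Rightarrow> real \<Rightarrow> 'b measure \<Rightarrow> bool" where
  "GC d \<kappa> M \<longleftrightarrow>
     (\<forall>F::'b \<Rightarrow> real. (\<forall>x\<in>space M. \<forall>y\<in>space M. \<bar>F x - F y\<bar> \<le> d x y) \<longrightarrow>
        integrable M F \<and>
        (\<forall>t::real. integrable M (\<lambda>x. exp (t * F x)) \<and>
           (\<integral>x. exp (t * F x) \<partial>M) \<le> exp (t * (\<integral>x. F x \<partial>M) + \<kappa> * t\<^sup>2 / 2)))"

definition couplings :: "'a::metric_space measure \<Rightarrow> 'a measure \<Rightarrow> ('a \<times> 'a) measure set" where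
  "couplings \<mu> \<nu> = {\<pi>. prob_space \<pi> \<and> sets \<pi> = sets (borel \<Otimes>\<^sub>M borel) \<and>
      distr \<pi> borel fst = \<mu> \<and> distr \<pi> borel snd = \<nu>}"

definition W1 :: "'a::metric_space measure \<Rightarrow> 'a measure \<Rightarrow> ennreal" where
  "W1 \<mu> \<nu> = (INF \<pi>\<in>couplings \<mu> \<nu>. \<integral>\<^sup>+ z. ennreal (dist (fst z) (snd z)) \<partial>\<pi>)"

definition Prob1 :: "'a::metric_space measure \<Rightarrow> bool" where
  "Prob1 \<nu> \<longleftrightarrow> (\<exists>x0. (\<integral>\<^sup>+ y. ennreal (dist x0 y) \<partial>\<nu>) < \<infinity>)"

text \<open>The metric d^(1) on X^n, points of X^n represented as functions on {..<n}.\<close>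
definition dist1 :: "nat \<Rightarrow> (nat \<Rightarrow> 'a::metric_space) \<Rightarrow> (nat \<Rightarrow> 'a) \<Rightarrow> real" where
  "dist1 n x y = (\<Sum>j<n. dist (x j) (y j))"

text \<open>Joint law P^(n) of (xi_1,...,xi_n) (indexed 0..n-1) on the product space
  PiM {..<n} (\<lambda>_. borel).\<close>
fun joint :: "('a::topological_space \<Rightarrow> 'a measure) \<Rightarrow> 'a measure \<Rightarrow> nat \<Rightarrow> (nat \<Rightarrow> 'a) measure" where
  "joint p P1 0 = PiM {} (\<lambda>_. borel)"
| "joint p P1 (Suc n) =
     bind (joint p P1 n)
       (\<lambda>x. distr (if n = 0 then P1 else p (x (n - 1)))
                  (PiM {..<Suc n} (\<lambda>_. borel)) (\<lambda>y. x(n := y)))"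

end

theory Submission imports Defs begin


lemma GC_scale:
  fixes g :: "'b \<Rightarrow> real"
  assumes GC: "GC d \<kappa> M" and c: "c > 0"
    and lip: "\<And>x y. x \<in> space M \<Longrightarrow> y \<in> space M \<Longrightarrow> \<bar>g x - g y\<bar> \<le> c * d x y"
  shows "integrable M g"
    and "integrable M (\<lambda>x. exp (t * g x))"
    and "(\<integral>x. exp (t * g x) \<partial>M) \<le> exp (t * (\<integral>x. g x \<partial>M) + \<kappa> * c\<^sup>2 * t\<^sup>2 / 2)"
proof -
  let ?h = "\<lambda>x. g x / c"
  have "\<forall>x\<in>space M. \<forall>y\<in>space M. \<bar>?h x - ?h y\<bar> \<le> d x y"
  proof (intro ballI)
    fix x y assume "x \<in> space M" "y \<in> space M"
    then have "\<bar>g x - g y\<bar> / c \<le> d x y" using lip c by (simp add: divide_le_eq mult.commute)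
    then show "\<bar>?h x - ?h y\<bar> \<le> d x y" using c by (simp add: diff_divide_distrib[symmetric])
  qed
  note H = GC[unfolded GC_def, THEN spec[of _ ?h], THEN mp, OF this]
  have eq: "\<And>x. g x = c * ?h x" using c by simp
  have "integrable M (\<lambda>x. c * ?h x)" using H by (intro integrable_mult_right) simp
  then show "integrable M g" using c by simp
  have e2: "\<And>x. exp (t * g x) = exp ((t * c) * ?h x)" using c by simp
  show "integrable M (\<lambda>x. exp (t * g x))" using H e2 by presburger
  have "(\<integral>x. exp (t * g x) \<partial>M) = (\<integral>x. exp ((t * c) * ?h x) \<partial>M)" using e2 by presburger
  also have "\<dots> \<le> exp ((t * c) * (\<integral>x. ?h x \<partial>M) + \<kappa> * (t * c)\<^sup>2 / 2)" using H by blast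
  also have "(t * c) * (\<integral>x. ?h x \<partial>M) = t * (\<integral>x. g x \<partial>M)" using c by simp
  also have "\<kappa> * (t * c)\<^sup>2 / 2 = \<kappa> * c\<^sup>2 * t\<^sup>2 / 2" by (simp add: power_mult_distrib)
  finally show "(\<integral>x. exp (t * g x) \<partial>M) \<le> exp (t * (\<integral>x. g x \<partial>M) + \<kappa> * c\<^sup>2 * t\<^sup>2 / 2)" .
qed




lemma lip_measurable_PiM:
  fixes F :: "(nat \<Rightarrow> 'a::polish_space) \<Rightarrow> real" and a :: "nat \<Rightarrow> real"
  assumes a: "\<And>j. a j \<ge> 0"
    and lip: "\<And>x y. x \<in> space (PiM {..<m} (\<lambda>_. borel)) \<Longrightarrow> y \<in> space (PiM {..<m} (\<lambda>_. borel)) \<Longrightarrow>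
       \<bar>F x - F y\<bar> \<le> (\<Sum>j<m. a j * dist (x j) (y j))"
  shows "F \<in> borel_measurable (PiM {..<m} (\<lambda>_. borel))"
proof -
  let ?S = "PiM {..<m} (\<lambda>_. borel :: 'a measure)"
  obtain D :: "'a set" where D: "countable D" "\<And>X. open X \<Longrightarrow> X \<noteq> {} \<Longrightarrow> \<exists>d\<in>D. d \<in> X"
    using countable_dense_setE by blast
  let ?Q = "PiE {..<m} (\<lambda>_. D)"
  have cQ: "countable ?Q" using D(1) by (intro countable_PiE) auto
  have Dne: "D \<noteq> {}" using D(2)[of UNIV] by auto
  have QS: "?Q \<subseteq> space ?S" by (auto simp: space_PiM)
  define T where "T q z = F q + (\<Sum>j<m. a j * dist (z j) (q j))" for q z
  have Tm: "T q \<in> borel_measurable ?S" for q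
    unfolding T_def by measurable
  have eq: "F z = (INF q\<in>?Q. T q z)" if z: "z \<in> space ?S" for z
  proof (rule antisym)
    have Qne: "?Q \<noteq> {}" using Dne by (simp add: PiE_eq_empty_iff)
    have low: "F z \<le> T q z" if "q \<in> ?Q" for q
    proof -
      have "\<bar>F q - F z\<bar> \<le> (\<Sum>j<m. a j * dist (q j) (z j))" using lip that QS z by blast
      then show ?thesis unfolding T_def by (simp add: dist_commute)
    qed
    then show "F z \<le> (INF q\<in>?Q. T q z)" using Qne by (intro cINF_greatest) auto
    have bdd: "bdd_below ((\<lambda>q. T q z) ` ?Q)" using low by (intro bdd_belowI2) 
    show "(INF q\<in>?Q. T q z) \<le> F z"
    proof (rule field_le_epsilon)
      fix e :: real assume e: "e > 0"
      define A where "A = (\<Sum>j<m. a j)"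
      have A0: "A \<ge> 0" unfolding A_def using a by (simp add: sum_nonneg)
      define e' where "e' = e / (2 * A + 1)"
      have e': "e' > 0" unfolding e'_def using e A0 by simp
      have "\<forall>j. \<exists>d. d \<in> D \<and> dist (z j) d < e'"
      proof
        fix j
        have "ball (z j) e' \<noteq> {}" using e' by auto
        then obtain d where "d \<in> D" "d \<in> ball (z j) e'" using D(2)[of "ball (z j) e'"] by blast
        then show "\<exists>d. d \<in> D \<and> dist (z j) d < e'" by auto
      qed
      then obtain f where f: "\<And>j. f j \<in> D \<and> dist (z j) (f j) < e'" by metis
      define q where "q = restrict f {..<m}"
      have q: "q \<in> ?Q" unfolding q_def using f by auto
      have dq: "\<And>j. j < m \<Longrightarrow> dist (z j) (q j) < e'" unfolding q_def using f by auto
      have "\<bar>F q - F z\<bar> \<le> (\<Sum>j<m. a j * dist (q j) (z j))" using lip q QS z by blast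
      also have "\<dots> \<le> (\<Sum>j<m. a j * e')"
        using dq a by (intro sum_mono mult_left_mono) (auto simp: dist_commute less_imp_le)
      finally have 1: "F q \<le> F z + A * e'" unfolding A_def by (simp add: sum_distrib_right)
      have 2: "(\<Sum>j<m. a j * dist (z j) (q j)) \<le> A * e'"
        unfolding A_def sum_distrib_right
        using dq a by (intro sum_mono mult_left_mono) (auto simp: less_imp_le)
      have "(INF q\<in>?Q. T q z) \<le> T q z" using q bdd by (intro cINF_lower) auto
      also have "\<dots> \<le> F z + 2 * A * e'" using 1 2 unfolding T_def by simp
      also have "2 * A * e' \<le> e" unfolding e'_def using e A0 by (simp add: field_simps)
      finally show "(INF q\<in>?Q. T q z) \<le> F z + e" by simp
    qed
  qed
  have "(\<lambda>z. INF q\<in>?Q. T q z) \<in> borel_measurable ?S"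
    using cQ Tm by (intro borel_measurable_cINF_real) auto
  then show ?thesis using eq by (subst measurable_cong[where g="\<lambda>z. INF q\<in>?Q. T q z"]) auto
qed




lemma W1_bound:
  fixes f :: "'a::polish_space \<Rightarrow> real"
  assumes \<mu>: "\<mu> \<in> space (prob_algebra borel)" and \<nu>: "\<nu> \<in> space (prob_algebra borel)"
    and c: "c \<ge> 0" and r: "r \<ge> 0"
    and lip: "\<And>u v. \<bar>f u - f v\<bar> \<le> c * dist u v"
    and fi: "integrable \<mu> f" "integrable \<nu> f"
    and W: "W1 \<mu> \<nu> \<le> ennreal r"
  shows "(\<integral>x. f x \<partial>\<mu>) - (\<integral>x. f x \<partial>\<nu>) \<le> c * r"
proof (rule field_le_epsilon)
  fix e0 :: real assume e0: "e0 > 0"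
  define e where "e = e0 / (c + 1)"
  have e: "e > 0" using e0 c by (simp add: e_def)
  have "W1 \<mu> \<nu> < ennreal (r + e)" using W e r
    by (metis add.right_neutral add_left_mono ennreal_lessI le_less_trans less_le_not_le ennreal_le_iff add_strict_left_mono order.strict_trans1 linorder_not_le)
  then obtain \<pi> where \<pi>: "\<pi> \<in> couplings \<mu> \<nu>" and lt: "(\<integral>\<^sup>+ z. ennreal (dist (fst z) (snd z)) \<partial>\<pi>) < ennreal (r + e)"
    unfolding W1_def by (auto simp: INF_less_iff)
  have ps: "prob_space \<pi>" and sp: "sets \<pi> = sets (borel \<Otimes>\<^sub>M borel)"
    and d1: "distr \<pi> borel fst = \<mu>" and d2: "distr \<pi> borel snd = \<nu>"
    using \<pi> unfolding couplings_def by auto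
  have mfst: "fst \<in> measurable \<pi> (borel :: 'a measure)"
    using measurable_fst[of "borel :: 'a measure" "borel :: 'a measure"] by (simp add: measurable_cong_sets[OF sp refl])
  have msnd: "snd \<in> measurable \<pi> (borel :: 'a measure)"
    using measurable_snd[of "borel :: 'a measure" "borel :: 'a measure"] by (simp add: measurable_cong_sets[OF sp refl])
  have fm: "f \<in> borel_measurable borel"
  proof -
    have "continuous_on UNIV f"
    proof (cases "c = 0")
      case True then have "\<And>u v. f u = f v" using lip by (metis abs_le_zero_iff mult_zero_left right_minus_eq)
      then have "f = (\<lambda>_. f undefined)" by blast
      then show ?thesis by (metis continuous_on_const)
    next
      case False
      then have "lipschitz_on c UNIV f" using lip c by (intro lipschitz_onI) (auto simp: dist_real_def)
      then show ?thesis by (rule lipschitz_on_continuous_on)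
    qed
    then show ?thesis by (rule borel_measurable_continuous_onI)
  qed
  have I1: "integrable \<pi> (\<lambda>z. f (fst z))" using fi(1) d1 integrable_distr_eq[OF mfst fm] by simp
  have I2: "integrable \<pi> (\<lambda>z. f (snd z))" using fi(2) d2 integrable_distr_eq[OF msnd fm] by simp
  have E1: "(\<integral>x. f x \<partial>\<mu>) = (\<integral>z. f (fst z) \<partial>\<pi>)" using integral_distr[OF mfst fm] d1 by simp
  have E2: "(\<integral>x. f x \<partial>\<nu>) = (\<integral>z. f (snd z) \<partial>\<pi>)" using integral_distr[OF msnd fm] d2 by simp
  have dm: "(\<lambda>z. dist (fst z) (snd z)) \<in> borel_measurable \<pi>"
    using mfst msnd by (intro borel_measurable_dist) auto
  have Id: "integrable \<pi> (\<lambda>z. dist (fst z) (snd z))"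
    using lt dm by (intro integrableI_nonneg) (auto intro: order.strict_trans[OF _ ennreal_less_top])
  have "(\<integral>x. f x \<partial>\<mu>) - (\<integral>x. f x \<partial>\<nu>) = (\<integral>z. f (fst z) - f (snd z) \<partial>\<pi>)"
    using E1 E2 I1 I2 by simp
  also have "\<dots> \<le> (\<integral>z. c * dist (fst z) (snd z) \<partial>\<pi>)"
    using I1 I2 Id lip by (intro integral_mono) (auto simp: abs_le_iff)
  also have "\<dots> = c * (\<integral>z. dist (fst z) (snd z) \<partial>\<pi>)" by simp
  also have "(\<integral>z. dist (fst z) (snd z) \<partial>\<pi>) \<le> r + e"
  proof -
    have "ennreal (\<integral>z. dist (fst z) (snd z) \<partial>\<pi>) = (\<integral>\<^sup>+ z. ennreal (dist (fst z) (snd z)) \<partial>\<pi>)"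
      using Id by (intro nn_integral_eq_integral[symmetric]) auto
    then have "ennreal (\<integral>z. dist (fst z) (snd z) \<partial>\<pi>) < ennreal (r + e)" using lt by simp
    then show ?thesis by (simp add: ennreal_less_iff less_imp_le)
  qed
  then have "c * (\<integral>z. dist (fst z) (snd z) \<partial>\<pi>) \<le> c * (r + e)" using c by (rule mult_left_mono)
  also have "c * (r + e) \<le> c * r + e0" using c e0 by (simp add: e_def field_simps)
  finally show "(\<integral>x. f x \<partial>\<mu>) - (\<integral>x. f x \<partial>\<nu>) \<le> c * r + e0" .
qed




lemma integral_bind_nonneg:
  fixes h :: "'b \<Rightarrow> real"
  assumes N: "N \<in> M \<rightarrow>\<^sub>M subprob_algebra K" and hm: "h \<in> borel_measurable K"
    and ne: "space M \<noteq> {}" and h0: "\<And>y. h y \<ge> 0"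
    and int: "integrable (bind M N) h" and intx: "\<And>x. x \<in> space M \<Longrightarrow> integrable (N x) h"
  shows "integrable M (\<lambda>x. \<integral>y. h y \<partial>N x)" and "(\<integral>y. h y \<partial>(bind M N)) = (\<integral>x. \<integral>y. h y \<partial>N x \<partial>M)"
proof -
  have sN: "\<And>x. x \<in> space M \<Longrightarrow> sets (N x) = sets K"
    using N by (rule subprob_measurableD(2))
  have sB: "sets (bind M N) = sets K" using sN ne by (rule sets_bind)
  have gm: "(\<lambda>x. \<integral>y. h y \<partial>N x) \<in> borel_measurable M"
    using measurable_compose[OF N integral_measurable_subprob_algebra[OF hm]] by simp
  have eq: "\<And>x. x \<in> space M \<Longrightarrow> ennreal (\<integral>y. h y \<partial>N x) = (\<integral>\<^sup>+y. ennreal (h y) \<partial>N x)"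
    using intx h0 by (intro nn_integral_eq_integral[symmetric]) auto
  have "(\<integral>\<^sup>+x. ennreal (\<integral>y. h y \<partial>N x) \<partial>M) = (\<integral>\<^sup>+x. \<integral>\<^sup>+y. ennreal (h y) \<partial>N x \<partial>M)"
    using eq by (intro nn_integral_cong) auto
  also have "\<dots> = (\<integral>\<^sup>+y. ennreal (h y) \<partial>(bind M N))"
    using hm N by (intro nn_integral_bind[symmetric]) auto
  also have "\<dots> = ennreal (\<integral>y. h y \<partial>(bind M N))"
    using int h0 by (intro nn_integral_eq_integral) auto
  finally have key: "(\<integral>\<^sup>+x. ennreal (\<integral>y. h y \<partial>N x) \<partial>M) = ennreal (\<integral>y. h y \<partial>(bind M N))" .
  show "integrable M (\<lambda>x. \<integral>y. h y \<partial>N x)"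
    using gm key h0 by (intro integrableI_nonneg) (auto intro: integral_nonneg)
  have "(\<integral>x. \<integral>y. h y \<partial>N x \<partial>M) = enn2real (\<integral>\<^sup>+x. ennreal (\<integral>y. h y \<partial>N x) \<partial>M)"
    using gm h0 by (intro integral_eq_nn_integral) (auto intro: integral_nonneg)
  also have "\<dots> = (\<integral>y. h y \<partial>(bind M N))" using key h0 by (simp add: integral_nonneg)
  finally show "(\<integral>y. h y \<partial>(bind M N)) = (\<integral>x. \<integral>y. h y \<partial>N x \<partial>M)" by simp
qed

lemma integral_bind_real:
  fixes F :: "'b \<Rightarrow> real"
  assumes N: "N \<in> M \<rightarrow>\<^sub>M subprob_algebra K" and Fm: "F \<in> borel_measurable K"
    and ne: "space M \<noteq> {}"
    and int: "integrable (bind M N) F" and intx: "\<And>x. x \<in> space M \<Longrightarrow> integrable (N x) F"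
  shows "(\<integral>y. F y \<partial>(bind M N)) = (\<integral>x. \<integral>y. F y \<partial>N x \<partial>M)"
proof -
  let ?p = "\<lambda>y. max 0 (F y)" and ?n = "\<lambda>y. max 0 (- F y)"
  have pm: "?p \<in> borel_measurable K" and nm: "?n \<in> borel_measurable K" using Fm by auto
  have ip: "integrable (bind M N) ?p" "integrable (bind M N) ?n" using int by auto
  have ipx: "\<And>x. x \<in> space M \<Longrightarrow> integrable (N x) ?p" "\<And>x. x \<in> space M \<Longrightarrow> integrable (N x) ?n"
    using intx by auto
  note P = integral_bind_nonneg[OF N pm ne _ ip(1) ipx(1)]
  note Q = integral_bind_nonneg[OF N nm ne _ ip(2) ipx(2)]
  have dF: "\<And>y. F y = ?p y - ?n y" by auto
  have "(\<integral>y. F y \<partial>(bind M N)) = (\<integral>y. ?p y \<partial>(bind M N)) - (\<integral>y. ?n y \<partial>(bind M N))"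
    using int by (subst dF) (intro Bochner_Integration.integral_diff; auto)
  also have "\<dots> = (\<integral>x. (\<integral>y. ?p y \<partial>N x) - (\<integral>y. ?n y \<partial>N x) \<partial>M)"
    using P Q by (simp add: Bochner_Integration.integral_diff)
  also have "\<dots> = (\<integral>x. \<integral>y. F y \<partial>N x \<partial>M)"
  proof (intro Bochner_Integration.integral_cong refl)
    fix x assume x: "x \<in> space M"
    show "(\<integral>y. ?p y \<partial>N x) - (\<integral>y. ?n y \<partial>N x) = (\<integral>y. F y \<partial>N x)"
      using intx[OF x] by (subst (3) dF) (intro Bochner_Integration.integral_diff[symmetric]; auto)
  qed
  finally show ?thesis .
qed




lemma kernel_meas:
  fixes P1 :: "'a::polish_space measure" and p :: "'a \<Rightarrow> 'a measure"
  assumes P1: "P1 \<in> space (prob_algebra borel)" and p: "p \<in> borel \<rightarrow>\<^sub>M prob_algebra borel"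
  shows "(\<lambda>x. distr (if n = 0 then P1 else p (x (n - 1))) (PiM {..<Suc n} (\<lambda>_. borel)) (\<lambda>y. x(n := y)))
     \<in> PiM {..<n} (\<lambda>_. borel) \<rightarrow>\<^sub>M prob_algebra (PiM {..<Suc n} (\<lambda>_. borel))"
proof (rule measurable_distr_prob_space2)
  show "(\<lambda>x. if n = 0 then P1 else p (x (n - 1))) \<in> PiM {..<n} (\<lambda>_. borel) \<rightarrow>\<^sub>M prob_algebra borel"
  proof (cases "n = 0")
    case True then show ?thesis using P1 by simp
  next
    case False
    then have "(\<lambda>x. x (n - 1)) \<in> PiM {..<n} (\<lambda>_. borel) \<rightarrow>\<^sub>M (borel :: 'a measure)" by simp
    from measurable_compose[OF this p] show ?thesis using False by simp
  qed
  have "(\<lambda>(f, y). f(n := y)) \<in> measurable (PiM {..<n} (\<lambda>_. borel) \<Otimes>\<^sub>M (borel :: 'a measure)) (PiM (insert n {..<n}) (\<lambda>_. borel))"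
    by (rule measurable_add_dim)
  then show "(\<lambda>(x, y). x(n := y)) \<in> PiM {..<n} (\<lambda>_. borel) \<Otimes>\<^sub>M borel \<rightarrow>\<^sub>M PiM {..<Suc n} (\<lambda>_. borel :: 'a measure)"
    by (simp add: lessThan_Suc)
qed

lemma joint_space:
  fixes P1 :: "'a::polish_space measure" and p :: "'a \<Rightarrow> 'a measure"
  assumes P1: "P1 \<in> space (prob_algebra borel)" and p: "p \<in> borel \<rightarrow>\<^sub>M prob_algebra borel"
  shows "joint p P1 n \<in> space (prob_algebra (PiM {..<n} (\<lambda>_. borel)))"
proof (induction n)
  case 0
  have "prob_space (PiM {} (\<lambda>_. borel :: 'a measure))" by (intro prob_space_PiM) auto
  then show ?case by (simp add: space_prob_algebra)
next
  case (Suc n)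
  note K = kernel_meas[OF P1 p, of n]
  show ?case using prob_space_bind'[OF Suc K] sets_bind'[OF Suc K] by (simp add: space_prob_algebra)
qed

definition bb :: "real \<Rightarrow> nat \<Rightarrow> (nat \<Rightarrow> real) \<Rightarrow> nat \<Rightarrow> real" where
  "bb L n a k = (\<Sum>j=k..<n. a j * L ^ (j - k))"

lemma bb_last: "bb L (Suc n) a n = a n"
  by (simp add: bb_def)

lemma bb_upd:
  assumes "k < Suc m"
  shows "bb L (Suc m) (a(m := a m + L * a (Suc m))) k = bb L (Suc (Suc m)) a k"
proof -
  have k: "k \<le> m" using assms by simp
  have "bb L (Suc m) (a(m := a m + L * a (Suc m))) k
      = (\<Sum>j=k..<m. a j * L ^ (j - k)) + (a m + L * a (Suc m)) * L ^ (m - k)"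
    unfolding bb_def using k by (simp add: sum.op_ivl_Suc)
  also have "\<dots> = (\<Sum>j=k..<m. a j * L ^ (j - k)) + a m * L ^ (m - k) + a (Suc m) * L ^ (Suc m - k)"
    using k by (simp add: algebra_simps Suc_diff_le)
  also have "\<dots> = bb L (Suc (Suc m)) a k"
    unfolding bb_def using k by (simp add: sum.op_ivl_Suc)
  finally show ?thesis .
qed

lemma bb_one: "k \<le> n \<Longrightarrow> bb L n (\<lambda>_. 1) k = (\<Sum>i<n - k. L ^ i)"
proof (induction n)
  case 0 then show ?case by (simp add: bb_def)
next
  case (Suc n)
  show ?case
  proof (cases "k = Suc n")
    case True then show ?thesis by (simp add: bb_def)
  next
    case False
    then have k: "k \<le> n" using Suc.prems by simp
    have "bb L (Suc n) (\<lambda>_. 1) k = bb L n (\<lambda>_. 1) k + L ^ (n - k)"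
      unfolding bb_def using k by (simp add: sum.op_ivl_Suc)
    also have "\<dots> = (\<Sum>i<Suc (n - k). L ^ i)" using Suc.IH[OF k] by simp
    finally show ?thesis using k by (simp add: Suc_diff_le)
  qed
qed

lemma bb_const: "(\<Sum>k<n. (bb L n (\<lambda>_. 1) k)\<^sup>2) = (\<Sum>m=1..n. (\<Sum>k<m. L ^ k)\<^sup>2)"
proof -
  have "(\<Sum>k<n. (bb L n (\<lambda>_. 1) k)\<^sup>2) = (\<Sum>k<n. (\<Sum>i<n - k. L ^ i)\<^sup>2)"
    by (intro sum.cong refl) (simp add: bb_one)
  also have "\<dots> = (\<Sum>m=1..n. (\<Sum>k<m. L ^ k)\<^sup>2)"
  proof (rule sum.reindex_bij_witness[where i="\<lambda>m. n - m" and j="\<lambda>k. n - k"])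
  qed auto
  finally show ?thesis .
qed


lemma sum_upd_last:
  fixes a :: "nat \<Rightarrow> real"
  shows "(\<Sum>j<Suc n. a j * dist ((x(n:=y)) j) ((x'(n:=y')) j)) = (\<Sum>j<n. a j * dist (x j) (x' j)) + a n * dist y y'"
  by (simp add: sum.lessThan_Suc)

lemma sum_upd_weight:
  fixes a d :: "nat \<Rightarrow> real"
  shows "(\<Sum>j<Suc m. (a(m := a m + c)) j * d j) = (\<Sum>j<Suc m. a j * d j) + c * d m"
  by (simp add: sum.lessThan_Suc algebra_simps)

lemma main_induct:
  fixes P1 :: "'a::polish_space measure" and p :: "'a \<Rightarrow> 'a measure"
    and \<kappa>1 L :: real
  assumes L: "L \<ge> 0"
    and P1: "P1 \<in> space (prob_algebra borel)"
    and p: "p \<in> borel \<rightarrow>\<^sub>M prob_algebra borel"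
    and GC1: "GC dist \<kappa>1 P1"
    and GCp: "\<forall>x. GC dist \<kappa>1 (p x)"
    and W: "\<forall>x y. W1 (p x) (p y) \<le> ennreal (L * dist x y)"
  shows "\<forall>a F. (\<forall>j. 0 < a j) \<longrightarrow>
     (\<forall>x\<in>space (PiM {..<n} (\<lambda>_. borel)). \<forall>y\<in>space (PiM {..<n} (\<lambda>_. borel)).
        \<bar>F x - F y\<bar> \<le> (\<Sum>j<n. a j * dist (x j) (y j))) \<longrightarrow>
     integrable (joint p P1 n) F \<and>
     (\<forall>t. integrable (joint p P1 n) (\<lambda>x. exp (t * F x)) \<and>
        (\<integral>x. exp (t * F x) \<partial>joint p P1 n)
          \<le> exp (t * (\<integral>x. F x \<partial>joint p P1 n) + \<kappa>1 * (\<Sum>k<n. (bb L n a k)\<^sup>2) * t\<^sup>2 / 2))"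
proof (induction n)
  case 0
  have J0: "joint p P1 0 = count_space {\<lambda>_. undefined}" by (simp add: PiM_empty)
  show ?case unfolding J0
    by (simp add: integrable_count_space lebesgue_integral_count_space_finite)
next
  case (Suc n)
  show ?case
  proof (intro allI impI)
    fix a :: "nat \<Rightarrow> real" and F :: "(nat \<Rightarrow> 'a) \<Rightarrow> real"
    assume apos: "\<forall>j. 0 < a j"
    assume lip: "\<forall>x\<in>space (PiM {..<Suc n} (\<lambda>_. borel)). \<forall>y\<in>space (PiM {..<Suc n} (\<lambda>_. borel)).
        \<bar>F x - F y\<bar> \<le> (\<Sum>j<Suc n. a j * dist (x j) (y j))"
    define S where "S (m::nat) = PiM {..<m} (\<lambda>_. borel :: 'a measure)" for m
    define M where "M = joint p P1 n"
    define B where "B = joint p P1 (Suc n)"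
    define \<mu> where "\<mu> x = (if n = 0 then P1 else p (x (n - 1)))" for x :: "nat \<Rightarrow> 'a"
    define N where "N x = distr (\<mu> x) (S (Suc n)) (\<lambda>y. x(n := y))" for x
    have BMN: "B = bind M N" unfolding B_def M_def N_def \<mu>_def S_def by simp
    have MS: "M \<in> space (prob_algebra (S n))" unfolding M_def S_def by (rule joint_space[OF P1 p])
    have sM: "sets M = sets (S n)" and psM: "prob_space M" using MS by (auto simp: space_prob_algebra)
    have spM: "space M = space (S n)" using sM by (rule sets_eq_imp_space_eq)
    have neM: "space M \<noteq> {}" using psM prob_space.not_empty by blast
    have K: "N \<in> S n \<rightarrow>\<^sub>M prob_algebra (S (Suc n))"
      unfolding N_def \<mu>_def S_def by (rule kernel_meas[OF P1 p])
    have Ksub: "N \<in> M \<rightarrow>\<^sub>M subprob_algebra (S (Suc n))"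
      using measurable_prob_algebraD[OF K] by (simp add: measurable_cong_sets[OF sM refl])
    have BS: "B \<in> space (prob_algebra (S (Suc n)))" unfolding B_def S_def by (rule joint_space[OF P1 p])
    have sB: "sets B = sets (S (Suc n))" using BS by (auto simp: space_prob_algebra)
    have \<mu>S: "\<mu> x \<in> space (prob_algebra borel)" for x
      unfolding \<mu>_def using P1 measurable_space[OF p] by auto
    have s\<mu>: "sets (\<mu> x) = sets borel" for x using \<mu>S[of x] by (auto simp: space_prob_algebra)
    have sp\<mu>: "space (\<mu> x) = UNIV" for x using sets_eq_imp_space_eq[OF s\<mu>[of x]] by simp
    have GC\<mu>: "GC dist \<kappa>1 (\<mu> x)" for x unfolding \<mu>_def using GC1 GCp by auto
    have upd: "(\<lambda>y. x(n := y)) \<in> measurable (\<mu> x) (S (Suc n))" if "x \<in> space (S n)" for x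
      using measurable_component_update[of x "{..<n}" "\<lambda>_. borel :: 'a measure" n] that
      by (simp add: S_def lessThan_Suc measurable_cong_sets[OF s\<mu> refl])
    have updS: "x(n := y) \<in> space (S (Suc n))" if "x \<in> space (S n)" for x y
      using that by (auto simp: S_def space_PiM PiE_iff extensional_def)
    have Fm: "F \<in> borel_measurable (S (Suc n))"
      unfolding S_def using apos lip by (intro lip_measurable_PiM[where a=a]) (auto simp: less_imp_le)
    have lipx: "\<bar>F (z(n := u)) - F (z(n := v))\<bar> \<le> a n * dist u v" if "z \<in> space (S n)" for z u v
      using lip[rule_format, OF updS[OF that, unfolded S_def] updS[OF that, unfolded S_def]] sum_upd_last[where a=a and n=n and x=z and y=u and x'=z and y'=v]
      by simp
    have Iz: "integrable (\<mu> x) (\<lambda>y. F (z(n := y)))" if "z \<in> space (S n)" for x z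
    proof -
      have l: "\<And>u v. u \<in> space (\<mu> x) \<Longrightarrow> v \<in> space (\<mu> x) \<Longrightarrow> \<bar>F (z(n := u)) - F (z(n := v))\<bar> \<le> a n * dist u v"
        using lipx[OF that] by simp
      show ?thesis using GC_scale(1)[OF GC\<mu>[of x] _ l] apos by auto
    qed
    have Ez: "integrable (\<mu> x) (\<lambda>y. exp (t * F (z(n := y))))" 
      "(\<integral>y. exp (t * F (z(n := y))) \<partial>\<mu> x) \<le> exp (t * (\<integral>y. F (z(n := y)) \<partial>\<mu> x) + \<kappa>1 * (a n)\<^sup>2 * t\<^sup>2 / 2)"
      if "z \<in> space (S n)" for x z t
    proof -
      have l: "\<And>u v. u \<in> space (\<mu> x) \<Longrightarrow> v \<in> space (\<mu> x) \<Longrightarrow> \<bar>F (z(n := u)) - F (z(n := v))\<bar> \<le> a n * dist u v"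
        using lipx[OF that] by simp
      show "integrable (\<mu> x) (\<lambda>y. exp (t * F (z(n := y))))" using GC_scale(2)[OF GC\<mu>[of x] _ l] apos by auto
      show "(\<integral>y. exp (t * F (z(n := y))) \<partial>\<mu> x) \<le> exp (t * (\<integral>y. F (z(n := y)) \<partial>\<mu> x) + \<kappa>1 * (a n)\<^sup>2 * t\<^sup>2 / 2)"
        using GC_scale(3)[OF GC\<mu>[of x] _ l] apos by auto
    qed
    define G where "G x = (\<integral>y. F (x(n := y)) \<partial>\<mu> x)" for x
    define a' where "a' = a(n - 1 := a (n - 1) + L * a n)"
    have Lan: "0 \<le> L * a n" using apos L by (simp add: less_imp_le)
    have a'pos: "\<forall>j. 0 < a' j" using apos Lan by (auto simp: a'_def intro: add_pos_nonneg)
    have Glip1: "G x - G x' \<le> (\<Sum>j<n. a' j * dist (x j) (x' j))"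
      if x: "x \<in> space (S n)" and x': "x' \<in> space (S n)" for x x'
    proof -
      have "G x - G x' = (\<integral>y. F (x(n := y)) - F (x'(n := y)) \<partial>\<mu> x)
          + ((\<integral>y. F (x'(n := y)) \<partial>\<mu> x) - (\<integral>y. F (x'(n := y)) \<partial>\<mu> x'))"
        unfolding G_def using Iz[OF x] Iz[OF x'] by simp
      also have "(\<integral>y. F (x(n := y)) - F (x'(n := y)) \<partial>\<mu> x) \<le> (\<integral>y. (\<Sum>j<n. a j * dist (x j) (x' j)) \<partial>\<mu> x)"
      proof (rule integral_mono)
        show "integrable (\<mu> x) (\<lambda>y. F (x(n := y)) - F (x'(n := y)))" using Iz[OF x] Iz[OF x'] by simp
        have "prob_space (\<mu> x)" using \<mu>S[of x] by (simp add: space_prob_algebra)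
        then show "integrable (\<mu> x) (\<lambda>y. \<Sum>j<n. a j * dist (x j) (x' j))"
          by (simp add: prob_space.finite_measure finite_measure.integrable_const)
        fix y
        have "\<bar>F (x(n := y)) - F (x'(n := y))\<bar> \<le> (\<Sum>j<Suc n. a j * dist ((x(n:=y)) j) ((x'(n:=y)) j))"
          using lip updS[OF x] updS[OF x'] unfolding S_def by blast
        then show "F (x(n := y)) - F (x'(n := y)) \<le> (\<Sum>j<n. a j * dist (x j) (x' j))"
          using sum_upd_last[where a=a and n=n and x=x and y=y and x'=x' and y'=y] by simp
      qed
      also have "(\<integral>y. (\<Sum>j<n. a j * dist (x j) (x' j)) \<partial>\<mu> x) = (\<Sum>j<n. a j * dist (x j) (x' j))"
        using \<mu>S[of x] by (simp add: space_prob_algebra prob_space.prob_space)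
      also have "(\<integral>y. F (x'(n := y)) \<partial>\<mu> x) - (\<integral>y. F (x'(n := y)) \<partial>\<mu> x')
          \<le> (if n = 0 then 0 else a n * (L * dist (x (n - 1)) (x' (n - 1))))"
      proof (cases "n = 0")
        case True then show ?thesis by (simp add: \<mu>_def)
      next
        case False
        have "(\<integral>y. F (x'(n := y)) \<partial>p (x (n - 1))) - (\<integral>y. F (x'(n := y)) \<partial>p (x' (n - 1)))
            \<le> a n * (L * dist (x (n - 1)) (x' (n - 1)))"
          using apos L W Iz[OF x', of x] Iz[OF x', of x'] lipx[OF x'] False
          by (intro W1_bound[OF measurable_space[OF p] measurable_space[OF p]]) (auto simp: \<mu>_def less_imp_le)
        then show ?thesis using False by (simp add: \<mu>_def)
      qed
      also have "(\<Sum>j<n. a j * dist (x j) (x' j)) + (if n = 0 then 0 else a n * (L * dist (x (n - 1)) (x' (n - 1))))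
          = (\<Sum>j<n. a' j * dist (x j) (x' j))"
      proof (cases n)
        case 0 then show ?thesis by simp
      next
        case (Suc m)
        then show ?thesis unfolding a'_def
          using sum_upd_weight[where a=a and m=m and c="L * a (Suc m)" and d="\<lambda>j. dist (x j) (x' j)"] by (simp add: algebra_simps)
      qed
      finally show ?thesis by simp
    qed
    have Glip: "\<forall>x\<in>space (PiM {..<n} (\<lambda>_. borel)). \<forall>y\<in>space (PiM {..<n} (\<lambda>_. borel)).
        \<bar>G x - G y\<bar> \<le> (\<Sum>j<n. a' j * dist (x j) (y j))"
    proof (intro ballI)
      fix x y assume "x \<in> space (PiM {..<n} (\<lambda>_. borel :: 'a measure))" "y \<in> space (PiM {..<n} (\<lambda>_. borel :: 'a measure))"
      then have "G x - G y \<le> (\<Sum>j<n. a' j * dist (x j) (y j))" "G y - G x \<le> (\<Sum>j<n. a' j * dist (y j) (x j))"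
        using Glip1 unfolding S_def by blast+
      then show "\<bar>G x - G y\<bar> \<le> (\<Sum>j<n. a' j * dist (x j) (y j))" by (simp add: dist_commute abs_le_iff)
    qed
    have IH: "integrable M G \<and> (\<forall>t. integrable M (\<lambda>x. exp (t * G x)) \<and>
        (\<integral>x. exp (t * G x) \<partial>M) \<le> exp (t * (\<integral>x. G x \<partial>M) + \<kappa>1 * (\<Sum>k<n. (bb L n a' k)\<^sup>2) * t\<^sup>2 / 2))"
      unfolding M_def using Suc.IH a'pos Glip by blast
    have bbeq: "(\<Sum>k<n. (bb L n a' k)\<^sup>2) + (a n)\<^sup>2 = (\<Sum>k<Suc n. (bb L (Suc n) a k)\<^sup>2)"
    proof -
      have "(\<Sum>k<n. (bb L n a' k)\<^sup>2) = (\<Sum>k<n. (bb L (Suc n) a k)\<^sup>2)"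
      proof (cases n)
        case 0 then show ?thesis by simp
      next
        case (Suc m)
        then show ?thesis unfolding a'_def using bb_upd[of _ m L a] by (intro sum.cong refl) simp
      qed
      then show ?thesis by (simp add: bb_last)
    qed
    have NG: "(\<integral>y. F y \<partial>N x) = G x" if "x \<in> space M" for x
      unfolding N_def G_def using upd[of x] that spM Fm by (simp add: integral_distr)
    have NI: "integrable (N x) F" if "x \<in> space M" for x
      unfolding N_def using integrable_distr_eq[OF upd Fm, of x] Iz[of x x] that spM by simp
    have FmB: "F \<in> borel_measurable B" using Fm by (simp add: measurable_cong_sets[OF sB refl])
    have expT: "integrable B (\<lambda>x. exp (t * F x)) \<and>
        (\<integral>x. exp (t * F x) \<partial>B) \<le> exp (t * (\<integral>x. G x \<partial>M) + \<kappa>1 * (\<Sum>k<Suc n. (bb L (Suc n) a k)\<^sup>2) * t\<^sup>2 / 2)"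
      for t
    proof -
      define C where "C = exp (\<kappa>1 * (a n)\<^sup>2 * t\<^sup>2 / 2)"
      have em: "(\<lambda>z. ennreal (exp (t * F z))) \<in> borel_measurable (S (Suc n))" using Fm by measurable
      have "(\<integral>\<^sup>+z. ennreal (exp (t * F z)) \<partial>B) = (\<integral>\<^sup>+x. \<integral>\<^sup>+z. ennreal (exp (t * F z)) \<partial>N x \<partial>M)"
        unfolding BMN using em Ksub by (rule nn_integral_bind)
      also have "\<dots> \<le> (\<integral>\<^sup>+x. ennreal (exp (t * G x) * C) \<partial>M)"
      proof (rule nn_integral_mono)
        fix x assume x: "x \<in> space M"
        then have xS: "x \<in> space (S n)" using spM by simp
        have "(\<integral>\<^sup>+z. ennreal (exp (t * F z)) \<partial>N x) = (\<integral>\<^sup>+y. ennreal (exp (t * F (x(n := y)))) \<partial>\<mu> x)"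
          unfolding N_def using upd[OF xS] em by (simp add: nn_integral_distr)
        also have "\<dots> = ennreal (\<integral>y. exp (t * F (x(n := y))) \<partial>\<mu> x)"
          using Ez(1)[OF xS] by (intro nn_integral_eq_integral) auto
        also have "\<dots> \<le> ennreal (exp (t * G x) * C)"
          using Ez(2)[OF xS, of x t] by (simp add: G_def C_def exp_add[symmetric] add_ac)
        finally show "(\<integral>\<^sup>+z. ennreal (exp (t * F z)) \<partial>N x) \<le> ennreal (exp (t * G x) * C)" .
      qed
      also have "\<dots> = ennreal (\<integral>x. exp (t * G x) * C \<partial>M)"
        using IH by (intro nn_integral_eq_integral) (auto simp: C_def)
      finally have le: "(\<integral>\<^sup>+z. ennreal (exp (t * F z)) \<partial>B) \<le> ennreal (\<integral>x. exp (t * G x) * C \<partial>M)" .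
      have intB: "integrable B (\<lambda>x. exp (t * F x))"
        using FmB le by (intro integrableI_nonneg) (auto intro: le_less_trans[OF _ ennreal_less_top])
      have "(\<integral>x. exp (t * F x) \<partial>B) = enn2real (\<integral>\<^sup>+z. ennreal (exp (t * F z)) \<partial>B)"
        using FmB by (intro integral_eq_nn_integral) auto
      also have "\<dots> \<le> (\<integral>x. exp (t * G x) * C \<partial>M)"
      proof -
        have nn: "0 \<le> (\<integral>x. exp (t * G x) * C \<partial>M)" by (simp add: C_def integral_nonneg)
        show ?thesis using enn2real_mono[OF le] nn by simp
      qed
      also have "\<dots> = C * (\<integral>x. exp (t * G x) \<partial>M)" by simp
      also have "\<dots> \<le> C * exp (t * (\<integral>x. G x \<partial>M) + \<kappa>1 * (\<Sum>k<n. (bb L n a' k)\<^sup>2) * t\<^sup>2 / 2)"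
        using IH by (intro mult_left_mono) (auto simp: C_def)
      also have "\<dots> = exp (t * (\<integral>x. G x \<partial>M) + \<kappa>1 * (\<Sum>k<Suc n. (bb L (Suc n) a k)\<^sup>2) * t\<^sup>2 / 2)"
        unfolding C_def bbeq[symmetric] by (simp add: exp_add[symmetric] algebra_simps add_divide_distrib)
      finally show ?thesis using intB by simp
    qed
    have intF: "integrable B F"
    proof (rule Bochner_Integration.integrable_bound)
      show "integrable B (\<lambda>x. exp (1 * F x) + exp ((-1) * F x))"
        using expT[of 1] expT[of "-1"] by (intro Bochner_Integration.integrable_add) auto
      show "F \<in> borel_measurable B" by (rule FmB)
      show "AE x in B. norm (F x) \<le> norm (exp (1 * F x) + exp ((-1) * F x))"
      proof (intro AE_I2)
        fix x
        have "F x \<le> exp (F x)" "- F x \<le> exp (- F x)"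
          using exp_ge_add_one_self[of "F x"] exp_ge_add_one_self[of "- F x"] by linarith+
        then show "norm (F x) \<le> norm (exp (1 * F x) + exp ((-1) * F x))"
          by (simp add: abs_le_iff add_pos_pos) (smt (verit) exp_gt_zero)
      qed
    qed
    have mean: "(\<integral>x. F x \<partial>B) = (\<integral>x. G x \<partial>M)"
    proof -
      have "(\<integral>x. F x \<partial>B) = (\<integral>x. \<integral>y. F y \<partial>N x \<partial>M)"
        unfolding BMN using Ksub Fm neM intF[unfolded BMN] NI by (rule integral_bind_real)
      also have "\<dots> = (\<integral>x. G x \<partial>M)" using NG by (intro Bochner_Integration.integral_cong) auto
      finally show ?thesis .
    qed
    show "integrable (joint p P1 (Suc n)) F \<and>
       (\<forall>t. integrable (joint p P1 (Suc n)) (\<lambda>x. exp (t * F x)) \<and>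
          (\<integral>x. exp (t * F x) \<partial>joint p P1 (Suc n))
            \<le> exp (t * (\<integral>x. F x \<partial>joint p P1 (Suc n)) + \<kappa>1 * (\<Sum>k<Suc n. (bb L (Suc n) a k)\<^sup>2) * t\<^sup>2 / 2))"
      using intF expT mean unfolding B_def by simp
  qed
qed


theorem theorem1p1:
  fixes P1 :: "'a::polish_space measure" and p :: "'a \<Rightarrow> 'a measure"
    and \<kappa>1 L :: real and n :: nat
  assumes "n \<ge> 1" and "\<kappa>1 > 0" and "L \<ge> 0"
    and "P1 \<in> space (prob_algebra borel)"
    and "p \<in> borel \<rightarrow>\<^sub>M prob_algebra borel"
    and "GC dist \<kappa>1 P1"
    and "\<forall>x. GC dist \<kappa>1 (p x)"
    and "\<forall>x. Prob1 (p x)"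
    and "\<forall>x y. W1 (p x) (p y) \<le> ennreal (L * dist x y)"
  shows "GC (dist1 n) (\<kappa>1 * (\<Sum>m=1..n. (\<Sum>k<m. L ^ k)\<^sup>2)) (joint p P1 n)"
proof -
  note MI = main_induct[OF assms(3,4,5,6,7,9), of n]
  have sp: "space (joint p P1 n) = space (PiM {..<n} (\<lambda>_. borel))"
    using joint_space[OF assms(4,5), of n] by (intro sets_eq_imp_space_eq) (auto simp: space_prob_algebra)
  show ?thesis unfolding GC_def
  proof (intro allI impI)
    fix F :: "(nat \<Rightarrow> 'a) \<Rightarrow> real"
    assume lip: "\<forall>x\<in>space (joint p P1 n). \<forall>y\<in>space (joint p P1 n). \<bar>F x - F y\<bar> \<le> dist1 n x y"
    have lip': "\<forall>x\<in>space (PiM {..<n} (\<lambda>_. borel)). \<forall>y\<in>space (PiM {..<n} (\<lambda>_. borel)).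
        \<bar>F x - F y\<bar> \<le> (\<Sum>j<n. (\<lambda>_. 1::real) j * dist (x j) (y j))"
      using lip unfolding sp dist1_def by simp
    have one: "\<forall>j. 0 < (\<lambda>_. 1::real) j" by simp
    show "integrable (joint p P1 n) F \<and>
        (\<forall>t. integrable (joint p P1 n) (\<lambda>x. exp (t * F x)) \<and>
          (\<integral>x. exp (t * F x) \<partial>joint p P1 n)
          \<le> exp (t * (\<integral>x. F x \<partial>joint p P1 n) + \<kappa>1 * (\<Sum>m=1..n. (\<Sum>k<m. L ^ k)\<^sup>2) * t\<^sup>2 / 2))"
    proof -
      have H: "integrable (joint p P1 n) F \<and>
        (\<forall>t. integrable (joint p P1 n) (\<lambda>x. exp (t * F x)) \<and>
          (\<integral>x. exp (t * F x) \<partial>joint p P1 n)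
          \<le> exp (t * (\<integral>x. F x \<partial>joint p P1 n) + \<kappa>1 * (\<Sum>k<n. (bb L n (\<lambda>_. 1) k)\<^sup>2) * t\<^sup>2 / 2))"
        using spec[OF spec[OF MI, where x="\<lambda>_. 1::real"], where x=F] lip' by simp
      then show ?thesis by (simp add: bb_const)
    qed
  qed
qed

end
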